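(* Let $\mathbb{H}$ be a finite-dimensional complex Hilbert space with $\dim\mathbb{H}\ge2$, let $|X\rangle\in\mathbb{H}^{\otimes3}$ be a known unit vector, let $c_1,c_2>0$, and let $\alpha,\beta$ be nonzero complex numbers with $|\alpha|^2+|\beta|^2=1$, $|\mu\rangle=\alpha|0\rangle+\beta|1\rangle\in\mathbb{C}^2$. Then there exists a probabilistic quantum transformation $\mathcal{F}$ from $\mathbb{C}^2\otimes\mathbb{H}^{\otimes2}\otimes\mathbb{H}^{\otimes2}$ to $\mathbb{H}$, independent of $\alpha,\beta,\psi,\phi$, such that for all unit vectors $|\psi\rangle,|\phi\rangle\in\mathbb{H}$ satisfying $$|\langle X|(|\psi\rangle|\phi\rangle|\psi\rangle)|^2=c_1,\qquad |\langle X|(|\phi\rangle|\psi\rangle|\phi\rangle)|^2=c_2,$$ and all such $\alpha,\beta$, one has $\mathcal{F}(\rho_\mu\otimes\rho_\psi^{\otimes2}\otimes\rho_\phi^{\otimes2})=p\,\rho_\varphi$ where $$|\varphi\rangle\propto\alpha e^{i\theta_1}|\psi\rangle+\beta e^{i\theta_2}|\phi\rangle,\quad e^{i\theta_1}=\frac{\langle X|(|\phi\rangle|\psi\rangle|\phi\rangle)}{|\langle X|(|\phi\rangle|\psi\rangle|\phi\rangle)|},\quad e^{i\theta_2}=\frac{\langle X|(|\psi\rangle|\phi\rangle|\psi\rangle)}{|\langle X|(|\psi\rangle|\phi\rangle|\psi\rangle)|},$$ with success probability $p=\frac{c_1c_2}{c_1+c_2}\,\big\|\alpha e^{i\theta_1}|\psi\rangle+\beta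 e^{i\theta_2}|\phi\rangle\big\|^2$ (assumed nonzero).
   Context: For a unit vector $|\psi\rangle$, $\rho_\psi=|\psi\rangle\langle\psi|$; $|\varphi\rangle\propto|\chi\rangle$ means $|\varphi\rangle$ is the normalization of $|\chi\rangle$ up to a global phase. A probabilistic quantum transformation from $\mathbb{H}_1$ to $\mathbb{H}_2$ is a completely positive, trace-non-increasing linear map from operators on $\mathbb{H}_1$ to operators on $\mathbb{H}_2$. *)

theory Defs
  imports "Jordan_Normal_Form.Matrix" Complex_Main
begin

text \<open>Finite-dimensional complex Hilbert spaces are modelled as C^n with the standard
  inner product; vectors are complex vecs of dimension n, operators are complex
  n x n matrices.  Tensor products use the Kronecker convention: the basis vector
  e_i (x) e_j of C^m (x) C^n is e_(i*n+j) of C^(m*n).\<close>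

definition braket :: "complex vec \<Rightarrow> complex vec \<Rightarrow> complex" where
  "braket u v = (\<Sum>i<dim_vec u. cnj (u $ i) * v $ i)"

definition vnorm :: "complex vec \<Rightarrow> real" where
  "vnorm v = sqrt (\<Sum>i<dim_vec v. (cmod (v $ i))\<^sup>2)"

definition unit_vec_c :: "nat \<Rightarrow> complex vec \<Rightarrow> bool" where
  "unit_vec_c n v \<longleftrightarrow> v \<in> carrier_vec n \<and> vnorm v = 1"

definition tensor_vec :: "complex vec \<Rightarrow> complex vec \<Rightarrow> complex vec" where
  "tensor_vec u v = vec (dim_vec u * dim_vec v)
     (\<lambda>i. u $ (i div dim_vec v) * v $ (i mod dim_vec v))"

definition tensor_mat :: "complex mat \<Rightarrow> complex mat \<Rightarrow> complex mat" where
  "tensor_mat A B = mat (dim_row A * dim_row B) (dim_col A * dim_col B)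
     (\<lambda>(i, j). A $$ (i div dim_row B, j div dim_col B) * B $$ (i mod dim_row B, j mod dim_col B))"

definition proj :: "complex vec \<Rightarrow> complex mat" where
  "proj v = mat (dim_vec v) (dim_vec v) (\<lambda>(i, j). v $ i * cnj (v $ j))"

definition mtrace :: "complex mat \<Rightarrow> complex" where
  "mtrace A = (\<Sum>i<dim_row A. A $$ (i, i))"

definition psd :: "nat \<Rightarrow> complex mat \<Rightarrow> bool" where
  "psd n A \<longleftrightarrow> A \<in> carrier_mat n n \<and>
     (\<forall>v \<in> carrier_vec n. Im (braket v (A *\<^sub>v v)) = 0 \<and> Re (braket v (A *\<^sub>v v)) \<ge> 0)"

definition blk :: "nat \<Rightarrow> complex mat \<Rightarrow> nat \<Rightarrow> nat \<Rightarrow> complex mat" where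
  "blk n A a b = mat n n (\<lambda>(i, j). A $$ (a * n + i, b * n + j))"

text \<open>id_k (x) F, for a linear map F from operators on C^n to operators on C^m,
  acting on operators on C^k (x) C^n\<close>
definition ampl :: "nat \<Rightarrow> nat \<Rightarrow> nat \<Rightarrow> (complex mat \<Rightarrow> complex mat) \<Rightarrow> complex mat \<Rightarrow> complex mat" where
  "ampl k n m F A = mat (k * m) (k * m)
     (\<lambda>(I, J). F (blk n A (I div m) (J div m)) $$ (I mod m, J mod m))"

definition linear_map_op :: "nat \<Rightarrow> nat \<Rightarrow> (complex mat \<Rightarrow> complex mat) \<Rightarrow> bool" where
  "linear_map_op n m F \<longleftrightarrow>
     (\<forall>A \<in> carrier_mat n n. F A \<in> carrier_mat m m) \<and>
     (\<forall>A \<in> carrier_mat n n. \<forall>B \<in> carrier_mat n n. F (A + B) = F A + F B) \<and>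
     (\<forall>A \<in> carrier_mat n n. \<forall>c. F (c \<cdot>\<^sub>m A) = c \<cdot>\<^sub>m F A)"

definition completely_positive :: "nat \<Rightarrow> nat \<Rightarrow> (complex mat \<Rightarrow> complex mat) \<Rightarrow> bool" where
  "completely_positive n m F \<longleftrightarrow>
     (\<forall>k. \<forall>A. psd (k * n) A \<longrightarrow> psd (k * m) (ampl k n m F A))"

definition trace_nonincreasing :: "nat \<Rightarrow> (complex mat \<Rightarrow> complex mat) \<Rightarrow> bool" where
  "trace_nonincreasing n F \<longleftrightarrow> (\<forall>A. psd n A \<longrightarrow> Re (mtrace (F A)) \<le> Re (mtrace A))"

definition prob_qtrans :: "nat \<Rightarrow> nat \<Rightarrow> (complex mat \<Rightarrow> complex mat) \<Rightarrow> bool" where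
  "prob_qtrans n m F \<longleftrightarrow> linear_map_op n m F \<and> completely_positive n m F \<and> trace_nonincreasing n F"

end

theory Submission
  imports Defs
begin

definition madj :: "complex mat \<Rightarrow> complex mat" where
  "madj M = mat (dim_col M) (dim_row M) (\<lambda>(i,j). cnj (M $$ (j,i)))"

lemma madj_carrier[simp]: "M \<in> carrier_mat m n \<Longrightarrow> madj M \<in> carrier_mat n m"
  by (auto simp: madj_def)

lemma madj_index[simp]: "i < dim_col M \<Longrightarrow> j < dim_row M \<Longrightarrow> madj M $$ (i,j) = cnj (M $$ (j,i))"
  "dim_row (madj M) = dim_col M" "dim_col (madj M) = dim_row M"
  by (auto simp: madj_def)

lemma mult_index2:
  assumes "A \<in> carrier_mat m n" "B \<in> carrier_mat n l" "i < m" "j < l"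
  shows "(A * B) $$ (i,j) = (\<Sum>p<n. A $$ (i,p) * B $$ (p,j))"
  using assms by (auto simp: scalar_prod_def atLeast0LessThan intro!: sum.cong)

lemma mult_index3:
  assumes "A \<in> carrier_mat m n" "B \<in> carrier_mat n l" "C \<in> carrier_mat l r" "i < m" "j < r"
  shows "(A * B * C) $$ (i,j) = (\<Sum>p<n. \<Sum>q<l. A $$ (i,p) * B $$ (p,q) * C $$ (q,j))"
proof -
  have "(A * B * C) $$ (i,j) = (\<Sum>q<l. (A*B) $$ (i,q) * C $$ (q,j))"
    using assms by (intro mult_index2) auto
  also have "\<dots> = (\<Sum>q<l. \<Sum>p<n. A $$ (i,p) * B $$ (p,q) * C $$ (q,j))"
    using assms by (intro sum.cong refl, subst mult_index2[OF assms(1,2)]) (auto simp: sum_distrib_right)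
  also have "\<dots> = (\<Sum>p<n. \<Sum>q<l. A $$ (i,p) * B $$ (p,q) * C $$ (q,j))"
    by (rule sum.swap)
  finally show ?thesis .
qed

lemma conj_index:
  assumes "M \<in> carrier_mat m n" "A \<in> carrier_mat n n" "i < m" "j < m"
  shows "(M * A * madj M) $$ (i,j) = (\<Sum>p<n. \<Sum>q<n. M $$ (i,p) * A $$ (p,q) * cnj (M $$ (j,q)))"
  using assms by (subst mult_index3[of _ m n _ n _ m]) auto

lemma adj_braket:
  assumes "M \<in> carrier_mat m n" "v \<in> carrier_vec m" "u \<in> carrier_vec n"
  shows "braket v (M *\<^sub>v u) = braket (madj M *\<^sub>v v) u"
proof -
  have "braket v (M *\<^sub>v u) = (\<Sum>i<m. \<Sum>j<n. cnj (v $ i) * (M $$ (i,j) * u $ j))"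
    using assms by (auto simp: braket_def scalar_prod_def atLeast0LessThan sum_distrib_left intro!: sum.cong)
  also have "\<dots> = (\<Sum>j<n. \<Sum>i<m. cnj (v $ i) * (M $$ (i,j) * u $ j))" by (rule sum.swap)
  also have "\<dots> = braket (madj M *\<^sub>v v) u"
    using assms by (auto simp: braket_def scalar_prod_def atLeast0LessThan sum_distrib_right
        intro!: sum.cong)
  finally show ?thesis .
qed

lemma psd_conj:
  assumes "psd n A" "M \<in> carrier_mat m n"
  shows "psd m (M * A * madj M)"
proof -
  have A: "A \<in> carrier_mat n n" using assms unfolding psd_def by auto
  show ?thesis unfolding psd_def
  proof (intro conjI ballI)
    show "M * A * madj M \<in> carrier_mat m m" using A assms by auto
    fix v :: "complex vec" assume v: "v \<in> carrier_vec m"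
    let ?u = "madj M *\<^sub>v v"
    have Mh: "madj M \<in> carrier_mat n m" using assms(2) by simp
    have u: "?u \<in> carrier_vec n" by (rule mult_mat_vec_carrier[OF Mh v])
    have "(M * A * madj M) *\<^sub>v v = (M * A) *\<^sub>v ?u"
      by (rule assoc_mult_mat_vec[OF mult_carrier_mat[OF assms(2) A] Mh v])
    also have "\<dots> = M *\<^sub>v (A *\<^sub>v ?u)"
      by (rule assoc_mult_mat_vec[OF assms(2) A u])
    finally have "(M * A * madj M) *\<^sub>v v = M *\<^sub>v (A *\<^sub>v ?u)" .
    then have e: "braket v ((M * A * madj M) *\<^sub>v v) = braket ?u (A *\<^sub>v ?u)"
      using adj_braket[OF assms(2) v mult_mat_vec_carrier[OF A u]] by simp
    show "Im (braket v ((M * A * madj M) *\<^sub>v v)) = 0"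
         "Re (braket v ((M * A * madj M) *\<^sub>v v)) \<ge> 0"
      unfolding e using assms(1) u unfolding psd_def by auto
  qed
qed

lemma psd_trace:
  assumes "psd n B" shows "Re (mtrace B) \<ge> 0"
proof -
  have B: "B \<in> carrier_mat n n" using assms unfolding psd_def by auto
  have "\<And>i. i < n \<Longrightarrow> braket (unit_vec n i) (B *\<^sub>v unit_vec n i) = B $$ (i,i)"
  proof -
    fix i assume i: "i < n"
    have "braket (unit_vec n i) (B *\<^sub>v unit_vec n i) = (\<Sum>j<n. (if j = i then (B *\<^sub>v unit_vec n i) $ j else 0))"
      unfolding braket_def using i by (intro sum.cong) auto
    also have "\<dots> = (B *\<^sub>v unit_vec n i) $ i" using i by simp
    also have "\<dots> = (\<Sum>j<n. B $$ (i,j) * (if j = i then 1 else 0))"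
      using i B by (auto simp: scalar_prod_def atLeast0LessThan intro!: sum.cong)
    also have "\<dots> = (\<Sum>j<n. if j = i then B $$ (i,j) else 0)"
      by (intro sum.cong) auto
    also have "\<dots> = B $$ (i,i)" using i by simp
    finally show "braket (unit_vec n i) (B *\<^sub>v unit_vec n i) = B $$ (i,i)" .
  qed
  then have "\<And>i. i < n \<Longrightarrow> Re (B $$ (i,i)) \<ge> 0" using assms unfolding psd_def
    by (metis unit_vec_carrier)
  then have "(\<Sum>i<n. Re (B $$ (i,i))) \<ge> 0" by (intro sum_nonneg) auto
  then show ?thesis using B by (simp add: mtrace_def)
qed

lemma trace_conj:
  assumes "M \<in> carrier_mat m n" "A \<in> carrier_mat n n"
  shows "mtrace (M * A * madj M) = (\<Sum>p<n. \<Sum>q<n. A $$ (p,q) * (madj M * M) $$ (q,p))"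
proof -
  have "mtrace (M * A * madj M) = (\<Sum>i<m. (M * A * madj M) $$ (i,i))"
    using assms by (simp add: mtrace_def)
  also have "\<dots> = (\<Sum>i<m. \<Sum>p<n. \<Sum>q<n. M $$ (i,p) * A $$ (p,q) * cnj (M $$ (i,q)))"
    by (rule sum.cong[OF refl], rule conj_index[OF assms]) auto
  also have "\<dots> = (\<Sum>p<n. \<Sum>i<m. \<Sum>q<n. M $$ (i,p) * A $$ (p,q) * cnj (M $$ (i,q)))"
    by (rule sum.swap)
  also have "\<dots> = (\<Sum>p<n. \<Sum>q<n. \<Sum>i<m. M $$ (i,p) * A $$ (p,q) * cnj (M $$ (i,q)))"
    by (rule sum.cong[OF refl], rule sum.swap)
  also have "\<dots> = (\<Sum>p<n. \<Sum>q<n. A $$ (p,q) * (madj M * M) $$ (q,p))"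
    using assms by (intro sum.cong refl, subst mult_index2[of "madj M" n m M n]) (auto simp: sum_distrib_left mult_ac)
  finally show ?thesis .
qed

lemma sum_split_mult:
  fixes f :: "nat \<Rightarrow> complex" shows "(\<Sum>p<k*N. f p) = (\<Sum>a<k. \<Sum>b<N. f (a*N+b))"
proof (induction k)
  case 0 then show ?case by simp
next
  case (Suc k)
  have "{..<Suc k * N} = {..<k*N} \<union> {k*N..<N+k*N}" by auto
  then have "(\<Sum>p<Suc k*N. f p) = (\<Sum>p<k*N. f p) + (\<Sum>p\<in>{0+k*N..<N+k*N}. f p)"
    by (simp add: sum.union_disjoint ivl_disj_int)
  also have "(\<Sum>p\<in>{0+k*N..<N+k*N}. f p) = (\<Sum>b<N. f (k*N+b))"
    by (subst sum.shift_bounds_nat_ivl) (simp add: atLeast0LessThan add.commute)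
  finally show ?case using Suc by simp
qed

lemma sum_block:
  assumes "a < k"
  fixes g :: "nat \<Rightarrow> complex"
  shows "(\<Sum>p<k*N. if p div N = a then g p else 0) = (\<Sum>b<N. g (a*N+b))"
proof -
  have "(\<Sum>p<k*N. if p div N = a then g p else 0)
      = (\<Sum>a'<k. \<Sum>b<N. if (a'*N+b) div N = a then g (a'*N+b) else 0)"
    by (rule sum_split_mult)
  also have "\<dots> = (\<Sum>a'<k. if a' = a then (\<Sum>b<N. g (a*N+b)) else 0)"
    by (rule sum.cong[OF refl]) (auto intro!: sum.cong)
  also have "\<dots> = (\<Sum>b<N. g (a*N+b))" using assms by simp
  finally show ?thesis .
qed


lemma cp_kraus:
  assumes K: "K \<in> carrier_mat m n"
  shows "completely_positive n m (\<lambda>A. K * A * madj K)"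
  unfolding completely_positive_def
proof (intro allI impI)
  fix k A assume psd: "psd (k * n) A"
  have A: "A \<in> carrier_mat (k*n) (k*n)" using psd unfolding psd_def by auto
  define M where "M = mat (k*m) (k*n) (\<lambda>(I,p). if I div m = p div n then K $$ (I mod m, p mod n) else 0)"
  have M: "M \<in> carrier_mat (k*m) (k*n)" unfolding M_def by auto
  have "ampl k n m (\<lambda>A. K * A * madj K) A = M * A * madj M"
  proof (rule eq_matI)
    show "dim_row (ampl k n m (\<lambda>A. K * A * madj K) A) = dim_row (M * A * madj M)"
      "dim_col (ampl k n m (\<lambda>A. K * A * madj K) A) = dim_col (M * A * madj M)"
      using M by (auto simp: ampl_def)
    fix I J assume "I < dim_row (M * A * madj M)" "J < dim_col (M * A * madj M)"
    then have IJ: "I < k*m" "J < k*m" using M by auto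
    then have m0: "m > 0" by (cases m) auto
    have a: "I div m < k" "J div m < k" using IJ by (auto simp: less_mult_imp_div_less)
    have im: "I mod m < m" "J mod m < m" using m0 by auto
    have blk: "blk n A (I div m) (J div m) \<in> carrier_mat n n" by (simp add: blk_def)
    have "ampl k n m (\<lambda>A. K * A * madj K) A $$ (I,J)
       = (K * blk n A (I div m) (J div m) * madj K) $$ (I mod m, J mod m)"
      using IJ by (simp add: ampl_def)
    also have "\<dots> = (\<Sum>p<n. \<Sum>q<n. K $$ (I mod m,p) * A $$ (I div m * n + p, J div m * n + q) * cnj (K $$ (J mod m,q)))"
      by (subst conj_index[OF K blk im]) (simp add: blk_def)
    also have "\<dots> = (\<Sum>p<k*n. if p div n = I div m then (\<Sum>q<k*n. if q div n = J div m then
         K $$ (I mod m,p mod n) * A $$ (p, q) * cnj (K $$ (J mod m,q mod n)) else 0) else 0)"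
      using a by (simp add: sum_block)
    also have "\<dots> = (\<Sum>p<k*n. \<Sum>q<k*n. M $$ (I,p) * A $$ (p,q) * cnj (M $$ (J,q)))"
      using IJ unfolding M_def by (intro sum.cong refl) (auto intro!: sum.cong)
    also have "\<dots> = (M * A * madj M) $$ (I,J)"
      by (rule conj_index[OF M A IJ, symmetric])
    finally show "ampl k n m (\<lambda>A. K * A * madj K) A $$ (I,J) = (M * A * madj M) $$ (I,J)" .
  qed
  then show "psd (k * m) (ampl k n m (\<lambda>A. K * A * madj K) A)"
    using psd_conj[OF psd M] by simp
qed

lemma lin_kraus:
  assumes K: "K \<in> carrier_mat m n"
  shows "linear_map_op n m (\<lambda>A. K * A * madj K)"
  unfolding linear_map_op_def
proof (intro conjI ballI allI)
  fix A :: "complex mat" assume A: "A \<in> carrier_mat n n"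
  show "K * A * madj K \<in> carrier_mat m m" using K A by auto
  fix c show "K * (c \<cdot>\<^sub>m A) * madj K = c \<cdot>\<^sub>m (K * A * madj K)"
    using mult_smult_distrib[OF K A, of c] mult_smult_assoc_mat[OF mult_carrier_mat[OF K A] madj_carrier[OF K], of c]
    by simp
next
  fix A B :: "complex mat" assume A: "A \<in> carrier_mat n n" and B: "B \<in> carrier_mat n n"
  show "K * (A + B) * madj K = K * A * madj K + K * B * madj K"
    using mult_add_distrib_mat[OF K A B] add_mult_distrib_mat[OF mult_carrier_mat[OF K A] mult_carrier_mat[OF K B] madj_carrier[OF K]]
    by simp
qed

lemma tni_kraus:
  assumes K: "K \<in> carrier_mat m n" and iso: "K * madj K = 1\<^sub>m m"
  shows "trace_nonincreasing n (\<lambda>A. K * A * madj K)"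
  unfolding trace_nonincreasing_def
proof (intro allI impI)
  fix A assume psd: "psd n A"
  have A: "A \<in> carrier_mat n n" using psd unfolding psd_def by auto
  define P where "P = madj K * K"
  define L where "L = 1\<^sub>m n - P"
  have P: "P \<in> carrier_mat n n" using mult_carrier_mat[OF madj_carrier[OF K] K] by (simp add: P_def)
  have L: "L \<in> carrier_mat n n" using P by (simp add: L_def minus_carrier_mat)
  have PP: "P * P = P"
  proof -
    have Kh: "madj K \<in> carrier_mat n m" using K by simp
    have "P * P = madj K * (K * (madj K * K))"
      unfolding P_def by (rule assoc_mult_mat[OF Kh K mult_carrier_mat[OF Kh K]])
    also have "K * (madj K * K) = (K * madj K) * K"
      by (rule assoc_mult_mat[OF K Kh K, symmetric])
    also have "\<dots> = K" using iso K by simp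
    finally show ?thesis by (simp add: P_def)
  qed
  have adjL: "madj L = L"
  proof (rule eq_matI)
    fix i j assume "i < dim_row L" "j < dim_col L"
    then have ij: "i < n" "j < n" using L by auto
    have "P $$ (j,i) = (\<Sum>y<m. cnj (K $$ (y,j)) * K $$ (y,i))"
      unfolding P_def using K ij by (subst mult_index2[of _ n m _ n]) auto
    moreover have "P $$ (i,j) = (\<Sum>y<m. cnj (K $$ (y,i)) * K $$ (y,j))"
      unfolding P_def using K ij by (subst mult_index2[of _ n m _ n]) auto
    ultimately show "madj L $$ (i,j) = L $$ (i,j)" using ij L P
      by (auto simp: L_def mult.commute)
  qed (use L in auto)
  have LL: "madj L * L = L"
  proof -
    have "L * L = 1\<^sub>m n * L - P * L"
      unfolding L_def by (rule minus_mult_distrib_mat[OF one_carrier_mat P L[unfolded L_def]])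
    also have "P * L = P * 1\<^sub>m n - P * P"
      unfolding L_def by (rule mult_minus_distrib_mat[OF P one_carrier_mat P])
    finally have "L * L = 1\<^sub>m n - P - 0\<^sub>m n n" using P L PP by (simp add: L_def)
    also have "\<dots> = L" unfolding L_def by (rule eq_matI) (use P in auto)
    finally show ?thesis using adjL by simp
  qed
  have "0 \<le> Re (mtrace (L * A * madj L))" by (rule psd_trace[OF psd_conj[OF psd L]])
  also have "mtrace (L * A * madj L) = (\<Sum>p<n. \<Sum>q<n. A $$ (p,q) * L $$ (q,p))"
    using trace_conj[OF L A] LL by simp
  also have "\<dots> = (\<Sum>p<n. \<Sum>q<n. (if q = p then A $$ (p,q) else 0) - A $$ (p,q) * P $$ (q,p))"
    using P by (intro sum.cong refl) (auto simp: L_def algebra_simps)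
  also have "\<dots> = mtrace A - mtrace (K * A * madj K)"
    using trace_conj[OF K A] A by (simp add: sum_subtractf mtrace_def P_def)
  finally show "Re (mtrace (K * A * madj K)) \<le> Re (mtrace A)" by simp
qed

lemma pqt_kraus:
  assumes K: "K \<in> carrier_mat m n" and iso: "K * madj K = 1\<^sub>m m"
  shows "prob_qtrans n m (\<lambda>A. K * A * madj K)"
  using cp_kraus[OF K] lin_kraus[OF K] tni_kraus[OF K iso] by (simp add: prob_qtrans_def)


lemma dm: "x < (d::nat) \<Longrightarrow> (a*d+x) div d = a" "x < (d::nat) \<Longrightarrow> (a*d+x) mod d = x"
  by auto

lemma sum5:
  fixes f :: "nat \<Rightarrow> complex"
  shows "(\<Sum>i<2*d^2*d^2. f i) = (\<Sum>s<2. \<Sum>x1<d. \<Sum>x2<d. \<Sum>x3<d. \<Sum>x4<d.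
      f ((((s*d+x1)*d+x2)*d+x3)*d+x4))"
proof -
  have e: "2*d^2*d^2 = 2*d*d*d*d" by (simp add: power2_eq_square)
  show ?thesis unfolding e
    by (simp only: sum_split_mult[of _ "2*d*d*d" d] sum_split_mult[of _ "2*d*d" d]
        sum_split_mult[of _ "2*d" d] sum_split_mult[of _ 2 d])
qed

lemma sumA:
  fixes g :: "nat \<Rightarrow> complex"
  shows "(\<Sum>x1<d. \<Sum>x3<d. \<Sum>x4<d. g ((x3*d+x1)*d+x4)) = (\<Sum>j<d*d*d. g j)"
  by (simp only: sum_split_mult[of _ "d*d" d] sum_split_mult[of _ d d], rule sum.swap)

lemma sumB:
  fixes g :: "nat \<Rightarrow> complex"
  shows "(\<Sum>x1<d. \<Sum>x2<d. \<Sum>x3<d. g ((x1*d+x3)*d+x2)) = (\<Sum>j<d*d*d. g j)"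
proof -
  have "(\<Sum>j<d*d*d. g j) = (\<Sum>a<d*d. \<Sum>x2<d. g (a*d+x2))" by (rule sum_split_mult)
  also have "\<dots> = (\<Sum>x1<d. \<Sum>x3<d. \<Sum>x2<d. g ((x1*d+x3)*d+x2))" by (rule sum_split_mult)
  also have "\<dots> = (\<Sum>x1<d. \<Sum>x2<d. \<Sum>x3<d. g ((x1*d+x3)*d+x2))"
    by (rule sum.cong[OF refl], rule sum.swap)
  finally show ?thesis by simp
qed

lemma tensor_index:
  "i < dim_vec u * dim_vec v \<Longrightarrow> tensor_vec u v $ i = u $ (i div dim_vec v) * v $ (i mod dim_vec v)"
  "dim_vec (tensor_vec u v) = dim_vec u * dim_vec v"
  by (auto simp: tensor_vec_def)

lemma tensor3:
  assumes "dim_vec u = d" "dim_vec v = d" "dim_vec w = d" "j < d*d*d"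
  shows "tensor_vec (tensor_vec u v) w $ j = u $ (j div d div d) * v $ (j div d mod d) * w $ (j mod d)"
  using assms by (simp add: tensor_index less_mult_imp_div_less)

lemma braket3:
  assumes "dim_vec X = d^3" "dim_vec u = d" "dim_vec v = d" "dim_vec w = d"
  shows "braket X (tensor_vec (tensor_vec u v) w) =
    (\<Sum>j<d*d*d. cnj (X $ j) * (u $ (j div d div d) * v $ (j div d mod d) * w $ (j mod d)))"
proof -
  have e: "d^3 = d*d*d" by (simp add: power3_eq_cube)
  show ?thesis unfolding braket_def assms(1) e using assms(2-4)
    by (intro sum.cong refl) (simp add: tensor3)
qed

lemma tensor5:
  assumes "dim_vec m = 2" "dim_vec u = d" "dim_vec v = d" "i < 2*d^2*d^2"
  shows "tensor_vec (tensor_vec (tensor_vec (tensor_vec m u) u) v) v $ i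
    = m $ (i div d div d div d div d) * u $ (i div d div d div d mod d) * u $ (i div d div d mod d)
      * v $ (i div d mod d) * v $ (i mod d)"
proof -
  have "i < 2*d*d*d*d" using assms(4) by (simp add: power2_eq_square mult.assoc)
  then show ?thesis using assms by (simp add: tensor_index less_mult_imp_div_less)
qed


definition kf :: "nat \<Rightarrow> complex vec \<Rightarrow> complex \<Rightarrow> complex \<Rightarrow> nat \<Rightarrow> nat \<Rightarrow> complex" where
  "kf d X a b y i = (if i div d div d div d div d = 0
     then a * cnj (X $ ((i div d mod d * d + i div d div d div d mod d) * d + i mod d))
          * (if i div d div d mod d = y then 1 else 0)
     else b * cnj (X $ ((i div d div d div d mod d * d + i div d mod d) * d + i div d div d mod d))
          * (if i mod d = y then 1 else 0))"

definition Kop :: "nat \<Rightarrow> complex vec \<Rightarrow> complex \<Rightarrow> complex \<Rightarrow> complex mat" where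
  "Kop d X a b = mat d (2*d^2*d^2) (\<lambda>(y,i). kf d X a b y i)"

lemma Kop_carrier: "Kop d X a b \<in> carrier_mat d (2*d^2*d^2)" by (simp add: Kop_def)

lemma ind_sum: "y < (d::nat) \<Longrightarrow> (\<Sum>x<d. (if x = y then 1 else 0) * (c::complex)) = c"
proof -
  assume y: "y < d"
  have "(\<Sum>x<d. (if x = y then 1 else 0) * c) = (\<Sum>x<d. if x = y then c else 0)"
    by (intro sum.cong) auto
  then show ?thesis using y by simp
qed

lemma cnj_ind[simp]: "cnj (if P then 1 else 0) = (if P then 1 else 0)" by simp

lemma ind2_sum:
  assumes "y < (d::nat)" "y' < d"
  shows "(\<Sum>x<d. (if x = y then 1 else 0) * ((if x = y' then 1 else 0) * (g x :: complex))) = (if y = y' then g y else 0)"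
proof -
  have "(\<Sum>x<d. (if x = y then 1 else 0) * ((if x = y' then 1 else 0) * (g x :: complex)))
      = (\<Sum>x<d. if x = y then (if y = y' then g y else 0) else 0)"
    by (intro sum.cong) auto
  then show ?thesis using assms by simp
qed

lemma Kop_iso:
  assumes d: "d > 0" and X: "dim_vec X = d^3" and nX: "(\<Sum>j<d*d*d. cnj (X $ j) * X $ j) = 1"
    and ab: "a * cnj a + b * cnj b = 1"
  shows "Kop d X a b * madj (Kop d X a b) = 1\<^sub>m d"
proof (rule eq_matI)
  fix y y' assume "y < dim_row (1\<^sub>m d :: complex mat)" "y' < dim_col (1\<^sub>m d :: complex mat)"
  then have yy: "y < d" "y' < d" by auto
  let ?K = "Kop d X a b"
  define g0 where "g0 j = a * cnj a * (cnj (X $ j) * X $ j)" for j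
  define g1 where "g1 j = b * cnj b * (cnj (X $ j) * X $ j)" for j
  have "(?K * madj ?K) $$ (y,y') = (\<Sum>i<2*d^2*d^2. kf d X a b y i * cnj (kf d X a b y' i))"
    by (subst mult_index2[OF Kop_carrier madj_carrier[OF Kop_carrier]]) (use yy in \<open>auto simp: Kop_def\<close>)
  also have "\<dots> = (\<Sum>s<2. \<Sum>x1<d. \<Sum>x2<d. \<Sum>x3<d. \<Sum>x4<d.
      kf d X a b y ((((s*d+x1)*d+x2)*d+x3)*d+x4) * cnj (kf d X a b y' ((((s*d+x1)*d+x2)*d+x3)*d+x4)))"
    by (rule sum5)
  also have "\<dots> = (\<Sum>x1<d. \<Sum>x2<d. \<Sum>x3<d. \<Sum>x4<d.
      (if x2 = y then 1 else 0) * ((if x2 = y' then 1 else 0) * g0 ((x3*d+x1)*d+x4)))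
    + (\<Sum>x1<d. \<Sum>x2<d. \<Sum>x3<d. \<Sum>x4<d.
      (if x4 = y then 1 else 0) * ((if x4 = y' then 1 else 0) * g1 ((x1*d+x3)*d+x2)))"
    by (simp add: numeral_2_eq_2 kf_def dm sum.distrib mult_ac g0_def g1_def)
  finally have e0: "(?K * madj ?K) $$ (y,y') = (\<Sum>x1<d. \<Sum>x2<d. \<Sum>x3<d. \<Sum>x4<d.
      (if x2 = y then 1 else 0) * ((if x2 = y' then 1 else 0) * g0 ((x3*d+x1)*d+x4)))
    + (\<Sum>x1<d. \<Sum>x2<d. \<Sum>x3<d. \<Sum>x4<d.
      (if x4 = y then 1 else 0) * ((if x4 = y' then 1 else 0) * g1 ((x1*d+x3)*d+x2)))" .
  have S0: "(\<Sum>x1<d. \<Sum>x2<d. \<Sum>x3<d. \<Sum>x4<d.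
      (if x2 = y then 1 else 0) * ((if x2 = y' then 1 else 0) * g0 ((x3*d+x1)*d+x4)))
     = (\<Sum>x1<d. if y = y' then (\<Sum>x3<d. \<Sum>x4<d. g0 ((x3*d+x1)*d+x4)) else 0)"
  proof -
    have "(\<Sum>x1<d. \<Sum>x2<d. \<Sum>x3<d. \<Sum>x4<d.
      (if x2 = y then 1 else 0) * ((if x2 = y' then 1 else 0) * g0 ((x3*d+x1)*d+x4)))
     = (\<Sum>x1<d. \<Sum>x2<d. (if x2 = y then 1 else 0) * ((if x2 = y' then 1 else 0) *
          (\<Sum>x3<d. \<Sum>x4<d. g0 ((x3*d+x1)*d+x4))))"
      by (simp add: sum_distrib_left)
    also have "\<dots> = (\<Sum>x1<d. if y = y' then (\<Sum>x3<d. \<Sum>x4<d. g0 ((x3*d+x1)*d+x4)) else 0)"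
      using yy by (intro sum.cong refl ind2_sum)
    finally show ?thesis .
  qed
  have S1: "(\<Sum>x1<d. \<Sum>x2<d. \<Sum>x3<d. \<Sum>x4<d.
      (if x4 = y then 1 else 0) * ((if x4 = y' then 1 else 0) * g1 ((x1*d+x3)*d+x2)))
     = (\<Sum>x1<d. \<Sum>x2<d. \<Sum>x3<d. if y = y' then g1 ((x1*d+x3)*d+x2) else 0)"
    using yy by (intro sum.cong refl ind2_sum)
  show "(?K * madj ?K) $$ (y,y') = 1\<^sub>m d $$ (y,y')"
  proof (cases "y = y'")
    case False then show ?thesis using e0 S0 S1 yy by simp
  next
    case True
    have A: "(\<Sum>x1<d. \<Sum>x3<d. \<Sum>x4<d. g0 ((x3*d+x1)*d+x4)) = (\<Sum>j<d*d*d. g0 j)"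
      by (rule sumA)
    have B: "(\<Sum>x1<d. \<Sum>x2<d. \<Sum>x3<d. g1 ((x1*d+x3)*d+x2)) = (\<Sum>j<d*d*d. g1 j)"
      by (rule sumB)
    have "(?K * madj ?K) $$ (y,y') = a * cnj a * (\<Sum>j<d*d*d. cnj (X $ j) * X $ j) + b * cnj b * (\<Sum>j<d*d*d. cnj (X $ j) * X $ j)"
      using e0 S0 S1 True A B by (simp add: sum_distrib_left g0_def g1_def)
    then show ?thesis using True yy nX ab by simp
  qed
qed (auto simp: Kop_def)

lemma ind1_sum: "y < (d::nat) \<Longrightarrow> (\<Sum>x<d. (if x = y then 1 else 0) * (g x :: complex)) = g y"
proof -
  assume y: "y < d"
  have "(\<Sum>x<d. (if x = y then 1 else 0) * (g x :: complex)) = (\<Sum>x<d. if x = y then g x else 0)"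
    by (intro sum.cong) auto
  then show ?thesis using y by simp
qed

lemma Kop_apply:
  assumes d: "d > 0" and X: "dim_vec X = d^3" and dpsi: "dim_vec \<psi> = d" and dphi: "dim_vec \<phi> = d"
    and mu: "\<mu> = vec 2 (\<lambda>i. if i = 0 then \<alpha> else \<beta>)"
  shows "Kop d X a b *\<^sub>v tensor_vec (tensor_vec (tensor_vec (tensor_vec \<mu> \<psi>) \<psi>) \<phi>) \<phi>
    = vec d (\<lambda>y. a * \<alpha> * braket X (tensor_vec (tensor_vec \<phi> \<psi>) \<phi>) * \<psi> $ y
                 + b * \<beta> * braket X (tensor_vec (tensor_vec \<psi> \<phi>) \<psi>) * \<phi> $ y)"
    (is "?K *\<^sub>v ?v = ?w")
proof (rule eq_vecI)
  show "dim_vec (?K *\<^sub>v ?v) = dim_vec ?w" by (simp add: Kop_def)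
  fix y assume "y < dim_vec ?w"
  then have y: "y < d" by simp
  have dmu: "dim_vec \<mu> = 2" using mu by simp
  have dv: "dim_vec ?v = 2*d^2*d^2" using dmu dpsi dphi by (simp add: tensor_index power2_eq_square mult_ac)
  define G0 where "G0 j = cnj (X $ j) * (\<phi> $ (j div d div d) * \<psi> $ (j div d mod d) * \<phi> $ (j mod d))" for j
  define G1 where "G1 j = cnj (X $ j) * (\<psi> $ (j div d div d) * \<phi> $ (j div d mod d) * \<psi> $ (j mod d))" for j
  have B2: "braket X (tensor_vec (tensor_vec \<phi> \<psi>) \<phi>) = (\<Sum>j<d*d*d. G0 j)"
    unfolding G0_def by (rule braket3[OF X dphi dpsi dphi])
  have B1: "braket X (tensor_vec (tensor_vec \<psi> \<phi>) \<psi>) = (\<Sum>j<d*d*d. G1 j)"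
    unfolding G1_def by (rule braket3[OF X dpsi dphi dpsi])
  have "(?K *\<^sub>v ?v) $ y = (\<Sum>i<2*d^2*d^2. kf d X a b y i * ?v $ i)"
    using y dv by (auto simp: Kop_def scalar_prod_def atLeast0LessThan intro!: sum.cong)
  also have "\<dots> = (\<Sum>i<2*d^2*d^2. kf d X a b y i * (\<mu> $ (i div d div d div d div d) * \<psi> $ (i div d div d div d mod d) * \<psi> $ (i div d div d mod d)
      * \<phi> $ (i div d mod d) * \<phi> $ (i mod d)))"
    by (intro sum.cong refl, subst tensor5[OF dmu dpsi dphi]) auto
  also have "\<dots> = (\<Sum>s<2. \<Sum>x1<d. \<Sum>x2<d. \<Sum>x3<d. \<Sum>x4<d.
      (\<lambda>i. kf d X a b y i * (\<mu> $ (i div d div d div d div d) * \<psi> $ (i div d div d div d mod d) * \<psi> $ (i div d div d mod d)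
      * \<phi> $ (i div d mod d) * \<phi> $ (i mod d))) ((((s*d+x1)*d+x2)*d+x3)*d+x4))"
    by (rule sum5)
  also have "\<dots> = (\<Sum>x1<d. \<Sum>x2<d. \<Sum>x3<d. \<Sum>x4<d.
      (if x2 = y then 1 else 0) * (a * \<alpha> * \<psi> $ x2 * G0 ((x3*d+x1)*d+x4)))
    + (\<Sum>x1<d. \<Sum>x2<d. \<Sum>x3<d. \<Sum>x4<d.
      (if x4 = y then 1 else 0) * (b * \<beta> * \<phi> $ x4 * G1 ((x1*d+x3)*d+x2)))"
    by (simp add: numeral_2_eq_2 kf_def dm sum.distrib mult_ac G0_def G1_def mu)
  also have "(\<Sum>x1<d. \<Sum>x2<d. \<Sum>x3<d. \<Sum>x4<d.
      (if x2 = y then 1 else 0) * (a * \<alpha> * \<psi> $ x2 * G0 ((x3*d+x1)*d+x4)))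
     = a * \<alpha> * \<psi> $ y * braket X (tensor_vec (tensor_vec \<phi> \<psi>) \<phi>)"
  proof -
    have "(\<Sum>x1<d. \<Sum>x2<d. \<Sum>x3<d. \<Sum>x4<d.
      (if x2 = y then 1 else 0) * (a * \<alpha> * \<psi> $ x2 * G0 ((x3*d+x1)*d+x4)))
      = (\<Sum>x1<d. \<Sum>x2<d. (if x2 = y then 1 else 0) * (a * \<alpha> * \<psi> $ x2 * (\<Sum>x3<d. \<Sum>x4<d. G0 ((x3*d+x1)*d+x4))))"
      by (simp add: sum_distrib_left)
    also have "\<dots> = (\<Sum>x1<d. a * \<alpha> * \<psi> $ y * (\<Sum>x3<d. \<Sum>x4<d. G0 ((x3*d+x1)*d+x4)))"
      using y by (intro sum.cong refl ind1_sum)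
    also have "\<dots> = a * \<alpha> * \<psi> $ y * (\<Sum>x1<d. \<Sum>x3<d. \<Sum>x4<d. G0 ((x3*d+x1)*d+x4))"
      by (simp add: sum_distrib_left)
    also have "\<dots> = a * \<alpha> * \<psi> $ y * braket X (tensor_vec (tensor_vec \<phi> \<psi>) \<phi>)"
      unfolding B2 sumA ..
    finally show ?thesis .
  qed
  also have "(\<Sum>x1<d. \<Sum>x2<d. \<Sum>x3<d. \<Sum>x4<d.
      (if x4 = y then 1 else 0) * (b * \<beta> * \<phi> $ x4 * G1 ((x1*d+x3)*d+x2)))
     = b * \<beta> * \<phi> $ y * braket X (tensor_vec (tensor_vec \<psi> \<phi>) \<psi>)"
  proof -
    have "(\<Sum>x1<d. \<Sum>x2<d. \<Sum>x3<d. \<Sum>x4<d.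
      (if x4 = y then 1 else 0) * (b * \<beta> * \<phi> $ x4 * G1 ((x1*d+x3)*d+x2)))
      = (\<Sum>x1<d. \<Sum>x2<d. \<Sum>x3<d. b * \<beta> * \<phi> $ y * G1 ((x1*d+x3)*d+x2))"
      using y by (intro sum.cong refl ind1_sum)
    also have "\<dots> = b * \<beta> * \<phi> $ y * (\<Sum>x1<d. \<Sum>x2<d. \<Sum>x3<d. G1 ((x1*d+x3)*d+x2))"
      by (simp add: sum_distrib_left)
    also have "\<dots> = b * \<beta> * \<phi> $ y * braket X (tensor_vec (tensor_vec \<psi> \<phi>) \<psi>)"
      unfolding B1 sumB ..
    finally show ?thesis .
  qed
  finally show "(?K *\<^sub>v ?v) $ y = ?w $ y" using y by (simp add: mult_ac)
qed


lemma proj_tensor: "tensor_mat (proj u) (proj v) = proj (tensor_vec u v)"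
proof (rule eq_matI)
  fix i j assume "i < dim_row (proj (tensor_vec u v))" "j < dim_col (proj (tensor_vec u v))"
  then have ij: "i < dim_vec u * dim_vec v" "j < dim_vec u * dim_vec v" by (auto simp: proj_def tensor_vec_def)
  then have v0: "dim_vec v > 0" by (cases "dim_vec v") auto
  have "i div dim_vec v < dim_vec u" "j div dim_vec v < dim_vec u" using ij by (auto simp: less_mult_imp_div_less)
  moreover have "i mod dim_vec v < dim_vec v" "j mod dim_vec v < dim_vec v" using v0 by auto
  ultimately show "tensor_mat (proj u) (proj v) $$ (i, j) = proj (tensor_vec u v) $$ (i, j)"
    using ij by (simp add: tensor_mat_def proj_def tensor_vec_def)
qed (auto simp: tensor_mat_def proj_def tensor_vec_def)

lemma proj_conj:
  assumes K: "K \<in> carrier_mat m n" and v: "dim_vec v = n"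
  shows "K * proj v * madj K = proj (K *\<^sub>v v)"
proof (rule eq_matI)
  have P: "proj v \<in> carrier_mat n n" using v by (simp add: proj_def)
  fix i j assume "i < dim_row (proj (K *\<^sub>v v))" "j < dim_col (proj (K *\<^sub>v v))"
  then have ij: "i < m" "j < m" using K by (auto simp: proj_def)
  have "(K * proj v * madj K) $$ (i,j) = (\<Sum>p<n. \<Sum>q<n. K $$ (i,p) * proj v $$ (p,q) * cnj (K $$ (j,q)))"
    by (rule conj_index[OF K P ij])
  also have "\<dots> = (\<Sum>p<n. K $$ (i,p) * v $ p) * cnj (\<Sum>q<n. K $$ (j,q) * v $ q)"
    using v by (simp add: proj_def sum_distrib_left sum_distrib_right mult_ac cnj_sum) (rule sum.swap)
  also have "\<dots> = proj (K *\<^sub>v v) $$ (i,j)"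
    using ij K v by (simp add: proj_def scalar_prod_def atLeast0LessThan)
  finally show "(K * proj v * madj K) $$ (i,j) = proj (K *\<^sub>v v) $$ (i,j)" .
qed (use K in \<open>auto simp: proj_def\<close>)

lemma unit_sum:
  assumes "unit_vec_c (d^3) X"
  shows "(\<Sum>j<d*d*d. cnj (X $ j) * X $ j) = 1" "dim_vec X = d^3"
proof -
  have X: "dim_vec X = d^3" "vnorm X = 1" using assms by (auto simp: unit_vec_c_def)
  then have s: "(\<Sum>i<d^3. (cmod (X $ i))\<^sup>2) = 1" unfolding vnorm_def by simp
  have "(\<Sum>j<d*d*d. cnj (X $ j) * X $ j) = complex_of_real (\<Sum>i<d^3. (cmod (X $ i))\<^sup>2)"
    unfolding of_real_sum power3_eq_cube
    by (intro sum.cong refl) (simp add: complex_norm_square mult.commute del: of_real_power)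
  then show "(\<Sum>j<d*d*d. cnj (X $ j) * X $ j) = 1" using s by simp
  show "dim_vec X = d^3" using X by simp
qed

theorem theorem8:
  fixes d :: nat and X :: "complex vec" and c1 c2 :: real
  assumes "d \<ge> 2"
    and "unit_vec_c (d ^ 3) X"
    and "c1 > 0" and "c2 > 0"
  shows "\<exists>F. prob_qtrans (2 * d ^ 2 * d ^ 2) d F \<and>
    (\<forall>\<psi> \<phi> (\<alpha>::complex) (\<beta>::complex).
       unit_vec_c d \<psi> \<longrightarrow> unit_vec_c d \<phi> \<longrightarrow>
       (cmod (braket X (tensor_vec (tensor_vec \<psi> \<phi>) \<psi>)))\<^sup>2 = c1 \<longrightarrow>
       (cmod (braket X (tensor_vec (tensor_vec \<phi> \<psi>) \<phi>)))\<^sup>2 = c2 \<longrightarrow>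
       \<alpha> \<noteq> 0 \<longrightarrow> \<beta> \<noteq> 0 \<longrightarrow> (cmod \<alpha>)\<^sup>2 + (cmod \<beta>)\<^sup>2 = 1 \<longrightarrow>
       (let \<mu> = vec 2 (\<lambda>i. if i = 0 then \<alpha> else \<beta>);
            e1 = braket X (tensor_vec (tensor_vec \<phi> \<psi>) \<phi>)
                 / complex_of_real (cmod (braket X (tensor_vec (tensor_vec \<phi> \<psi>) \<phi>)));
            e2 = braket X (tensor_vec (tensor_vec \<psi> \<phi>) \<psi>)
                 / complex_of_real (cmod (braket X (tensor_vec (tensor_vec \<psi> \<phi>) \<psi>)));
            w = (\<alpha> * e1) \<cdot>\<^sub>v \<psi> + (\<beta> * e2) \<cdot>\<^sub>v \<phi>;
            \<phi>' = complex_of_real (1 / vnorm w) \<cdot>\<^sub>v w;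
            p = c1 * c2 / (c1 + c2) * (vnorm w)\<^sup>2
        in p \<noteq> 0 \<longrightarrow>
           F (tensor_mat (tensor_mat (tensor_mat (tensor_mat (proj \<mu>) (proj \<psi>)) (proj \<psi>))
                (proj \<phi>)) (proj \<phi>))
           = complex_of_real p \<cdot>\<^sub>m proj \<phi>'))"
proof -
  have d: "d > 0" using assms(1) by simp
  have X: "dim_vec X = d^3" and nX: "(\<Sum>j<d*d*d. cnj (X $ j) * X $ j) = 1"
    using unit_sum[OF assms(2)] by auto
  define r where "r = sqrt (c1 * c2 / (c1 + c2))"
  define a where "a = complex_of_real (r / sqrt c2)"
  define b where "b = complex_of_real (r / sqrt c1)"
  have r2: "r^2 = c1 * c2 / (c1 + c2)" unfolding r_def using assms(3,4) by simp
  have ab: "a * cnj a + b * cnj b = 1"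
  proof -
    have e1: "(r / sqrt c2) * (r / sqrt c2) = r^2 / c2" using assms(4)
      by (simp add: power2_eq_square)
    have e2: "(r / sqrt c1) * (r / sqrt c1) = r^2 / c1" using assms(3)
      by (simp add: power2_eq_square)
    have "a * cnj a + b * cnj b = complex_of_real ((r / sqrt c2) * (r / sqrt c2) + (r / sqrt c1) * (r / sqrt c1))"
      by (simp only: a_def b_def complex_cnj_complex_of_real of_real_add of_real_mult)
    also have "\<dots> = complex_of_real (r^2 / c2 + r^2 / c1)" unfolding e1 e2 ..
    also have "r^2 / c2 + r^2 / c1 = 1"
    proof -
      have "r^2 / c2 = c1 / (c1 + c2)" "r^2 / c1 = c2 / (c1 + c2)" unfolding r2 using assms(3,4) by auto
      then show ?thesis using assms(3,4) by (simp add: add_divide_distrib[symmetric])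
    qed
    finally show ?thesis by (simp add: \<open>a * cnj a + b * cnj b = _\<close>)
  qed
  define K where "K = Kop d X a b"
  have K: "K \<in> carrier_mat d (2 * d ^ 2 * d ^ 2)" unfolding K_def by (rule Kop_carrier)
  have iso: "K * madj K = 1\<^sub>m d" unfolding K_def by (rule Kop_iso[OF d X nX ab])
  show ?thesis
  proof (rule exI[of _ "\<lambda>A. K * A * madj K"], intro conjI allI impI)
    show "prob_qtrans (2 * d ^ 2 * d ^ 2) d (\<lambda>A. K * A * madj K)" by (rule pqt_kraus[OF K iso])
    fix \<psi> \<phi> :: "complex vec" and \<alpha> \<beta> :: complex
    assume psi: "unit_vec_c d \<psi>" and phi: "unit_vec_c d \<phi>"
      and C1: "(cmod (braket X (tensor_vec (tensor_vec \<psi> \<phi>) \<psi>)))\<^sup>2 = c1"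
      and C2: "(cmod (braket X (tensor_vec (tensor_vec \<phi> \<psi>) \<phi>)))\<^sup>2 = c2"
      and "\<alpha> \<noteq> 0" "\<beta> \<noteq> 0" "(cmod \<alpha>)\<^sup>2 + (cmod \<beta>)\<^sup>2 = 1"
    have dpsi: "dim_vec \<psi> = d" and dphi: "dim_vec \<phi> = d" using psi phi by (auto simp: unit_vec_c_def)
    define B1 where "B1 = braket X (tensor_vec (tensor_vec \<psi> \<phi>) \<psi>)"
    define B2 where "B2 = braket X (tensor_vec (tensor_vec \<phi> \<psi>) \<phi>)"
    have m1: "cmod B1 = sqrt c1" using C1 unfolding B1_def by (metis norm_ge_zero real_sqrt_abs abs_of_nonneg)
    have m2: "cmod B2 = sqrt c2" using C2 unfolding B2_def by (metis norm_ge_zero real_sqrt_abs abs_of_nonneg)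
    define \<mu> where "\<mu> = vec 2 (\<lambda>i. if i = 0 then \<alpha> else \<beta>)"
    define w where "w = (\<alpha> * (B2 / complex_of_real (sqrt c2))) \<cdot>\<^sub>v \<psi> + (\<beta> * (B1 / complex_of_real (sqrt c1))) \<cdot>\<^sub>v \<phi>"
    define vn where "vn = vnorm w"
    define p where "p = c1 * c2 / (c1 + c2) * vn\<^sup>2"
    define v where "v = tensor_vec (tensor_vec (tensor_vec (tensor_vec \<mu> \<psi>) \<psi>) \<phi>) \<phi>"
    have dw: "dim_vec w = d" using dpsi dphi by (simp add: w_def)
    have dv: "dim_vec v = 2 * d ^ 2 * d ^ 2"
      by (simp add: v_def tensor_index dpsi dphi \<mu>_def power2_eq_square mult_ac)
    have Kv: "K *\<^sub>v v = complex_of_real r \<cdot>\<^sub>v w"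
    proof -
      have "K *\<^sub>v v = vec d (\<lambda>y. a * \<alpha> * B2 * \<psi> $ y + b * \<beta> * B1 * \<phi> $ y)"
        unfolding K_def v_def B1_def B2_def by (rule Kop_apply[OF d X dpsi dphi \<mu>_def])
      also have "\<dots> = complex_of_real r \<cdot>\<^sub>v w"
        by (rule eq_vecI) (auto simp: w_def dpsi dphi a_def b_def field_simps)
      finally show ?thesis .
    qed
    have inp: "tensor_mat (tensor_mat (tensor_mat (tensor_mat (proj \<mu>) (proj \<psi>)) (proj \<psi>)) (proj \<phi>)) (proj \<phi>) = proj v"
      by (simp add: proj_tensor v_def)
    show "let \<mu> = vec 2 (\<lambda>i. if i = 0 then \<alpha> else \<beta>);
            e1 = braket X (tensor_vec (tensor_vec \<phi> \<psi>) \<phi>)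
                 / complex_of_real (cmod (braket X (tensor_vec (tensor_vec \<phi> \<psi>) \<phi>)));
            e2 = braket X (tensor_vec (tensor_vec \<psi> \<phi>) \<psi>)
                 / complex_of_real (cmod (braket X (tensor_vec (tensor_vec \<psi> \<phi>) \<psi>)));
            w = (\<alpha> * e1) \<cdot>\<^sub>v \<psi> + (\<beta> * e2) \<cdot>\<^sub>v \<phi>;
            \<phi>' = complex_of_real (1 / vnorm w) \<cdot>\<^sub>v w;
            p = c1 * c2 / (c1 + c2) * (vnorm w)\<^sup>2
        in p \<noteq> 0 \<longrightarrow>
           K * tensor_mat (tensor_mat (tensor_mat (tensor_mat (proj \<mu>) (proj \<psi>)) (proj \<psi>))
                (proj \<phi>)) (proj \<phi>) * madj K
           = complex_of_real p \<cdot>\<^sub>m proj \<phi>'"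
      unfolding Let_def \<mu>_def[symmetric] B1_def[symmetric] B2_def[symmetric] m1 m2 w_def[symmetric]
        vn_def[symmetric] p_def[symmetric] inp
    proof
      assume "p \<noteq> 0"
      then have vn0: "vn \<noteq> 0" unfolding p_def by auto
      have sc: "complex_of_real r * cnj (complex_of_real r) =
          complex_of_real p * (complex_of_real (1 / vn) * cnj (complex_of_real (1 / vn)))"
      proof -
        have "r * r = p * ((1 / vn) * (1 / vn))"
          using vn0 r2 unfolding p_def by (simp add: power2_eq_square)
        then show ?thesis by (simp only: complex_cnj_complex_of_real of_real_mult[symmetric])
      qed
      have "K * proj v * madj K = proj (complex_of_real r \<cdot>\<^sub>v w)"
        unfolding Kv[symmetric] by (rule proj_conj[OF K dv])
      also have "\<dots> = complex_of_real p \<cdot>\<^sub>m proj (complex_of_real (1 / vn) \<cdot>\<^sub>v w)"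
      proof (rule eq_matI)
        fix i j assume "i < dim_row (complex_of_real p \<cdot>\<^sub>m proj (complex_of_real (1 / vn) \<cdot>\<^sub>v w))"
          "j < dim_col (complex_of_real p \<cdot>\<^sub>m proj (complex_of_real (1 / vn) \<cdot>\<^sub>v w))"
        then have ij: "i < d" "j < d" using dw by (auto simp: proj_def)
        have "proj (complex_of_real r \<cdot>\<^sub>v w) $$ (i,j) = (complex_of_real r * cnj (complex_of_real r)) * (w $ i * cnj (w $ j))"
          using ij dw by (simp add: proj_def)
        also have "\<dots> = (complex_of_real p * (complex_of_real (1 / vn) * cnj (complex_of_real (1 / vn)))) * (w $ i * cnj (w $ j))"
          unfolding sc ..
        also have "\<dots> = (complex_of_real p \<cdot>\<^sub>m proj (complex_of_real (1 / vn) \<cdot>\<^sub>v w)) $$ (i,j)"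
          using ij dw by (simp add: proj_def)
        finally show "proj (complex_of_real r \<cdot>\<^sub>v w) $$ (i,j) = (complex_of_real p \<cdot>\<^sub>m proj (complex_of_real (1 / vn) \<cdot>\<^sub>v w)) $$ (i,j)" .
      qed (auto simp: proj_def)
      finally show "K * proj v * madj K = complex_of_real p \<cdot>\<^sub>m proj (complex_of_real (1 / vn) \<cdot>\<^sub>v w)" .
    qed
  qed
qed

end
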